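(* Let $(E,\mathscr{T},\le)$ be a Hausdorff Tychonoff space endowed with either the discrete preorder (i.e. $x\le y$ iff $x=y$) or the indiscrete preorder (i.e. $x\le y$ for all $x,y$). Let $\beta:E\to\beta E$ be the Stone–Čech compactification and $\le_\beta$ the preorder on $\beta E$ with $G(\le_\beta)=\bigcap_{f\in\mathcal{F}}G_{\tilde f}$, where $\mathcal{F}$ is the family of continuous isotone functions $f:E\to[0,1]$ and $\tilde f$ the unique continuous extension of $f\circ\beta^{-1}$ to $\beta E$. Then $(\beta E,\mathscr{T}_\beta,\le_\beta)$ is the Stone–Čech compactification endowed with the discrete preorder (resp. the indiscrete preorder).
   Context: Isotone: $x\le y\Rightarrow f(x)\le f(y)$. $G_f=\{(x,y):f(x)\le f(y)\}$, and $G(\le)$ denotes the graph of a preorder. *)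

theory Defs
  imports "HOL-Analysis.Analysis"
begin

definition isotone_on :: "'a topology \<Rightarrow> ('a \<Rightarrow> 'a \<Rightarrow> bool) \<Rightarrow> ('a \<Rightarrow> real) \<Rightarrow> bool" where
  "isotone_on X le f \<longleftrightarrow> (\<forall>x\<in>topspace X. \<forall>y\<in>topspace X. le x y \<longrightarrow> f x \<le> f y)"

definition stone_cech_compactification :: "'a topology \<Rightarrow> 'b topology \<Rightarrow> ('a \<Rightarrow> 'b) \<Rightarrow> bool" where
  "stone_cech_compactification X K b \<longleftrightarrow>
     compact_space K \<and> Hausdorff_space K \<and> embedding_map X K b \<and>
     K closure_of (b ` topspace X) = topspace K \<and>
     (\<forall>f. continuous_map X (top_of_set {0..1::real}) f \<longrightarrow>
        (\<exists>g. continuous_map K (top_of_set {0..1::real}) g \<and> (\<forall>x\<in>topspace X. g (b x) = f x)))"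

definition beta_le :: "'a topology \<Rightarrow> ('a \<Rightarrow> 'a \<Rightarrow> bool) \<Rightarrow> 'b topology \<Rightarrow> ('a \<Rightarrow> 'b) \<Rightarrow> 'b \<Rightarrow> 'b \<Rightarrow> bool" where
  "beta_le X le K b y1 y2 \<longleftrightarrow>
     (\<forall>f. continuous_map X (top_of_set {0..1::real}) f \<and> isotone_on X le f \<longrightarrow>
        (\<forall>g. continuous_map K (top_of_set {0..1::real}) g \<and> (\<forall>x\<in>topspace X. g (b x) = f x)
              \<longrightarrow> g y1 \<le> g y2))"

end

theory Submission
  imports Defs
begin

lemma emb_cont: "embedding_map X Y f \<Longrightarrow> continuous_map X Y f"
  unfolding embedding_map_def
  using homeomorphic_imp_continuous_map continuous_map_in_subtopology by blast

lemma one_minus_cont: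
  assumes "continuous_map K (top_of_set {0..1::real}) g"
  shows "continuous_map K (top_of_set {0..1::real}) (\<lambda>y. 1 - g y)"
proof -
  have c: "continuous_map K euclideanreal g" and r: "g \<in> topspace K \<rightarrow> {0..1}"
    using assms by (simp_all add: continuous_map_in_subtopology)
  have "continuous_map K euclideanreal (\<lambda>y. 1 - g y)"
    using c by (intro continuous_map_diff continuous_map_const[THEN iffD2]) auto
  moreover have "(\<lambda>y. 1 - g y) \<in> topspace K \<rightarrow> {0..1}" using r by force
  ultimately show ?thesis by (simp add: continuous_map_in_subtopology)
qed

theorem mainTheorem8:
  fixes X :: "'a topology" and K :: "'b topology" and b :: "'a \<Rightarrow> 'b"
  assumes "Hausdorff_space X" and "completely_regular_space X"
    and "stone_cech_compactification X K b"
  shows "(\<forall>y1\<in>topspace K. \<forall>y2\<in>topspace K. beta_le X (\<lambda>x y. x = y) K b y1 y2 \<longleftrightarrow> y1 = y2)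
       \<and> (\<forall>y1\<in>topspace K. \<forall>y2\<in>topspace K. beta_le X (\<lambda>x y. True) K b y1 y2)"
proof
  have cK: "compact_space K" and hK: "Hausdorff_space K" and emb: "embedding_map X K b"
    and cl: "K closure_of (b ` topspace X) = topspace K"
    using assms(3) unfolding stone_cech_compactification_def by simp_all
  have cb: "continuous_map X K b" by (rule emb_cont[OF emb])
  have bK: "b ` topspace X \<subseteq> topspace K"
    by (rule continuous_map_image_subset_topspace[OF cb])
  have crK: "completely_regular_space K"
    by (rule normal_imp_completely_regular_space[OF compact_Hausdorff_or_regular_imp_normal_space]) (simp_all add: cK hK)
  show "\<forall>y1\<in>topspace K. \<forall>y2\<in>topspace K. beta_le X (\<lambda>x y. x = y) K b y1 y2 \<longleftrightarrow> y1 = y2"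
  proof (intro ballI iffI)
    fix y1 y2 assume y: "y1 \<in> topspace K" "y2 \<in> topspace K" and le: "beta_le X (\<lambda>x y. x = y) K b y1 y2"
    show "y1 = y2"
    proof (rule ccontr)
      assume ne: "y1 \<noteq> y2"
      have "t1_space K" by (rule Hausdorff_imp_t1_space[OF hK])
      then have "closedin K {y2}"
        using y(2) unfolding t1_space_closedin_singleton by simp
      moreover have "y1 \<in> topspace K - {y2}" using y ne by simp
      ultimately have "\<exists>g. continuous_map K (top_of_set {0..1::real}) g \<and> g y1 = 0 \<and> g ` {y2} \<subseteq> {1}"
        using crK unfolding completely_regular_space_def apply (elim allE impE)
        apply (rule conjI; assumption)
        by assumption
      then obtain g where g: "continuous_map K (top_of_set {0..1::real}) g" "g y1 = 0" "g ` {y2} \<subseteq> {1}"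
        by blast
      define g' where "g' = (\<lambda>y. 1 - g y)"
      have g'c: "continuous_map K (top_of_set {0..1::real}) g'"
        unfolding g'_def by (rule one_minus_cont[OF g(1)])
      have fc: "continuous_map X (top_of_set {0..1::real}) (g' \<circ> b)"
        by (rule continuous_map_compose[OF cb g'c])
      have iso: "isotone_on X (\<lambda>x y. x = y) (g' \<circ> b)" by (simp add: isotone_on_def)
      have ext: "\<forall>x\<in>topspace X. g' (b x) = (g' \<circ> b) x" by simp
      have "g' y1 \<le> g' y2"
        using le unfolding beta_le_def
        apply (erule_tac x="g' \<circ> b" in allE)
        apply (erule impE, rule conjI[OF fc iso])
        apply (erule_tac x="g'" in allE)
        using g'c ext by blast
      then show False using g unfolding g'_def by simp
    qed
  next
    fix y1 y2 :: 'b assume "y1 = y2" then show "beta_le X (\<lambda>x y. x = y) K b y1 y2"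
      by (simp add: beta_le_def)
  qed
  show "\<forall>y1\<in>topspace K. \<forall>y2\<in>topspace K. beta_le X (\<lambda>x y. True) K b y1 y2"
  proof (intro ballI)
    fix y1 y2 assume y: "y1 \<in> topspace K" "y2 \<in> topspace K"
    show "beta_le X (\<lambda>x y. True) K b y1 y2" unfolding beta_le_def
    proof (intro allI impI)
      fix f :: "'a \<Rightarrow> real" and g
      assume f: "continuous_map X (top_of_set {0..1}) f \<and> isotone_on X (\<lambda>x y. True) f"
        and g: "continuous_map K (top_of_set {0..1}) g \<and> (\<forall>x\<in>topspace X. g (b x) = f x)"
      have "topspace X \<noteq> {}"
      proof
        assume "topspace X = {}"
        then have "topspace K = {}" using cl by simp
        then show False using y by simp
      qed
      then obtain x0 where x0: "x0 \<in> topspace X" by blast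
      have const: "\<forall>x\<in>topspace X. f x = f x0"
        using f x0 unfolding isotone_on_def by (meson order_antisym)
      have cg: "continuous_map K euclideanreal g"
        using g by (simp add: continuous_map_in_subtopology)
      have cl1: "closedin K {y \<in> topspace K. g y \<in> {f x0}}"
        by (rule closedin_continuous_map_preimage[OF cg]) simp
      have sub: "b ` topspace X \<subseteq> {y \<in> topspace K. g y \<in> {f x0}}"
        using bK g const by auto
      have "topspace K \<subseteq> {y \<in> topspace K. g y \<in> {f x0}}"
        using closure_of_minimal[OF sub cl1] cl by simp
      then have "g y1 = f x0" "g y2 = f x0" using y by blast+
      then show "g y1 \<le> g y2" by simp
    qed
  qed
qed

end
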